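(* Let $G = (\mathbb{Z}/2\mathbb{Z})^n$, $N = 2^n$, $A \subseteq G$, and $\epsilon \in (0,\tfrac12)$. Suppose that $H \leq G$ is a subgroup which is not $\epsilon$-regular for $A$. Then there is a subgroup $H' \leq H$ such that $|G/H'| \leq 2^{|G/H|}$ and $\mathrm{ind}(A;H') \geq \mathrm{ind}(A;H) + \epsilon^3$.
   Context: For a subgroup $H \leq G$ and $g \in G$, let $A_H^{+g} = \{x \in H : x + g \in A\}$. Define $\mathrm{ind}(A;H) = \frac{1}{N}\sum_{g \in G}\left(|A_H^{+g}|/|H|\right)^2$. An element $g \in G$ is an $\epsilon$-regular value (with respect to $A$ and $H$) if for every nontrivial character $\chi$ of $H$, $\left|\sum_{x \in H} A_H^{+g}(x)\chi(x)\right| \leq \epsilon|H|$, where $A_H^{+g}$ also denotes its indicator function. $H$ is $\epsilon$-regular for $A$ if the number of $g \in G$ which are not $\epsilon$-regular values is at most $\epsilon N$. *)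

theory Defs
  imports "HOL-Analysis.Analysis" "HOL-Library.Z2"
begin

instance bit :: finite
proof
  have "(UNIV :: bit set) = {0, 1}" using bit_not_zero_iff by auto
  then show "finite (UNIV :: bit set)" by (metis finite.emptyI finite_insert)
qed

text \<open>G = (Z/2Z)^n is modelled as the type bit ^ 'n for a finite index type 'n
  (n = CARD('n)); N = card G = 2^n.\<close>

definition is_subgroup :: "('a::ab_group_add) set \<Rightarrow> bool" where
  "is_subgroup H \<longleftrightarrow> 0 \<in> H \<and> (\<forall>x\<in>H. \<forall>y\<in>H. x + y \<in> H) \<and> (\<forall>x\<in>H. - x \<in> H)"

definition quotient_set :: "('a::ab_group_add) set \<Rightarrow> 'a set set" where
  "quotient_set H = {(\<lambda>h. g + h) ` H | g. g \<in> UNIV}"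

definition shifted :: "('a::ab_group_add) set \<Rightarrow> 'a set \<Rightarrow> 'a \<Rightarrow> 'a set" where
  "shifted A H g = {x \<in> H. x + g \<in> A}"

definition ind :: "('a::{ab_group_add,finite}) set \<Rightarrow> 'a set \<Rightarrow> real" where
  "ind A H = (1 / real (card (UNIV :: 'a set))) *
     (\<Sum>g\<in>UNIV. (real (card (shifted A H g)) / real (card H)) ^ 2)"

definition is_character :: "('a::ab_group_add) set \<Rightarrow> ('a \<Rightarrow> complex) \<Rightarrow> bool" where
  "is_character H chi \<longleftrightarrow> (\<forall>x\<in>H. chi x \<noteq> 0) \<and> (\<forall>x\<in>H. \<forall>y\<in>H. chi (x + y) = chi x * chi y)"

definition nontrivial_character :: "('a::ab_group_add) set \<Rightarrow> ('a \<Rightarrow> complex) \<Rightarrow> bool" where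
  "nontrivial_character H chi \<longleftrightarrow> is_character H chi \<and> (\<exists>x\<in>H. chi x \<noteq> 1)"

definition regular_value :: "real \<Rightarrow> ('a::ab_group_add) set \<Rightarrow> 'a set \<Rightarrow> 'a \<Rightarrow> bool" where
  "regular_value \<epsilon> A H g \<longleftrightarrow>
     (\<forall>chi. nontrivial_character H chi \<longrightarrow>
        cmod (\<Sum>x\<in>H. (if x \<in> shifted A H g then 1 else 0) * chi x) \<le> \<epsilon> * real (card H))"

definition eps_regular :: "real \<Rightarrow> ('a::{ab_group_add,finite}) set \<Rightarrow> 'a set \<Rightarrow> bool" where
  "eps_regular \<epsilon> A H \<longleftrightarrow>
     real (card {g. \<not> regular_value \<epsilon> A H g}) \<le> \<epsilon> * real (card (UNIV :: 'a set))"

end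

theory Submission
  imports Defs
begin

lemma vadd_self [simp]: "(x::bit^'n::finite) + x = 0"
  by (simp add: vec_eq_iff)

lemma vneg [simp]: "- (x::bit^'n::finite) = x"
  by (simp add: vec_eq_iff)

lemma vadd_cancel [simp]: "(x::bit^'n::finite) + y + y = x"
  by (simp add: add.assoc)

lemma add2_cancel [simp]: "(x::bit^'n::finite) + t + (y + t) = x + y"
  by (metis add.commute add.left_commute vadd_cancel)

lemma sg0: "is_subgroup H \<Longrightarrow> 0 \<in> H"
  by (simp add: is_subgroup_def)

lemma sgadd: "is_subgroup H \<Longrightarrow> x \<in> H \<Longrightarrow> y \<in> H \<Longrightarrow> x + y \<in> H"
  by (simp add: is_subgroup_def)

lemma sg_card_pos: "is_subgroup (H::(bit^'n::finite) set) \<Longrightarrow> card H > 0"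
proof -
  assume "is_subgroup H"
  then have "0 \<in> H" by (rule sg0)
  then have "H \<noteq> {}" by blast
  then show "card H > 0" by (simp add: card_gt_0_iff)
qed

lemma sum_shift:
  fixes H :: "(bit^'n::finite) set"
  assumes "is_subgroup H" "t \<in> H"
  shows "(\<Sum>h\<in>H. f (h + t)) = (\<Sum>h\<in>H. f h)"
proof -
  have inj: "inj_on (\<lambda>h. h + t) H" by (auto simp: inj_on_def)
  have img: "(\<lambda>h. h + t) ` H = H"
  proof
    show "(\<lambda>h. h + t) ` H \<subseteq> H" using assms sgadd by blast
    show "H \<subseteq> (\<lambda>h. h + t) ` H"
    proof
      fix x assume "x \<in> H"
      then have "x + t \<in> H" using assms sgadd by blast
      moreover have "x = (x + t) + t" by simp
      ultimately show "x \<in> (\<lambda>h. h + t) ` H" by blast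
    qed
  qed
  have "(\<Sum>h\<in>(\<lambda>h. h + t) ` H. f h) = (\<Sum>h\<in>H. f (h + t))"
    using sum.reindex[OF inj, of f] by (simp add: comp_def)
  then show ?thesis using img by simp
qed

lemma card_shifted_sum:
  "card (shifted A H g) = (\<Sum>x\<in>(H::(bit^'n::finite) set). if x + g \<in> A then 1 else (0::nat))"
proof -
  have "{x \<in> H. x + g \<in> A} = H \<inter> {x. x + g \<in> A}" by blast
  then show ?thesis unfolding shifted_def by (simp add: sum.If_cases)
qed

lemma shift_inv:
  fixes S :: "(bit^'n::finite) set"
  assumes "is_subgroup S" "t \<in> S"
  shows "card (shifted A S (y + t)) = card (shifted A S y)"
proof -
  have "card (shifted A S (y + t)) = (\<Sum>x\<in>S. if x + (y + t) \<in> A then 1 else (0::nat))"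
    by (rule card_shifted_sum)
  also have "\<dots> = (\<Sum>x\<in>S. if (x + t) + (y + t) \<in> A then 1 else (0::nat))"
    using sum_shift[OF assms, of "\<lambda>x. if x + (y + t) \<in> A then 1 else (0::nat)"] by simp
  also have "\<dots> = (\<Sum>x\<in>S. if x + y \<in> A then 1 else (0::nat))"
    by (simp add: add2_cancel)
  finally show ?thesis by (simp add: card_shifted_sum)
qed

lemma tower:
  fixes S T :: "(bit^'n::finite) set"
  assumes "is_subgroup S" "is_subgroup T" "S \<subseteq> T"
  shows "(\<Sum>t\<in>T. card (shifted A S (g + t))) = card S * card (shifted A T g)"
proof -
  have "(\<Sum>t\<in>T. card (shifted A S (g + t)))
      = (\<Sum>t\<in>T. \<Sum>x\<in>S. if x + (g + t) \<in> A then 1 else (0::nat))"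
    by (simp add: card_shifted_sum)
  also have "\<dots> = (\<Sum>x\<in>S. \<Sum>t\<in>T. if x + (g + t) \<in> A then 1 else (0::nat))"
    by (rule sum.swap)
  also have "\<dots> = (\<Sum>x\<in>S. \<Sum>t\<in>T. if t + g \<in> A then 1 else (0::nat))"
  proof (rule sum.cong[OF refl])
    fix x assume "x \<in> S"
    then have "x \<in> T" using assms by blast
    have "(\<Sum>t\<in>T. if x + (g + t) \<in> A then 1 else (0::nat))
        = (\<Sum>t\<in>T. if (t + x) + g \<in> A then 1 else (0::nat))"
      by (simp add: algebra_simps)
    also have "\<dots> = (\<Sum>t\<in>T. if t + g \<in> A then 1 else (0::nat))"
      using sum_shift[OF assms(2) \<open>x \<in> T\<close>, of "\<lambda>t. if t + g \<in> A then 1 else (0::nat)"] by simp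
    finally show "(\<Sum>t\<in>T. if x + (g + t) \<in> A then 1 else (0::nat))
        = (\<Sum>t\<in>T. if t + g \<in> A then 1 else (0::nat))" .
  qed
  also have "\<dots> = card S * card (shifted A T g)"
    by (simp add: card_shifted_sum)
  finally show ?thesis .
qed

lemma jensen:
  fixes S T :: "(bit^'n::finite) set"
  assumes "is_subgroup S" "is_subgroup T" "S \<subseteq> T"
  shows "(\<Sum>t\<in>T. (real (card (shifted A S (g + t))) / real (card S)) ^ 2)
     \<ge> real (card T) * (real (card (shifted A T g)) / real (card T)) ^ 2"
proof -
  have pS: "real (card S) > 0" and pT: "real (card T) > 0" using sg_card_pos assms by auto
  have "(\<Sum>t\<in>T. real (card (shifted A S (g + t))) / real (card S))
      = real (\<Sum>t\<in>T. card (shifted A S (g + t))) / real (card S)"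
    by (simp add: sum_divide_distrib)
  also have "\<dots> = real (card (shifted A T g))"
  proof -
    have "real (\<Sum>t\<in>T. card (shifted A S (g + t))) = real (card S) * real (card (shifted A T g))"
      using tower[OF assms, of A g] by simp
    then show ?thesis using pS by (metis less_irrefl nonzero_mult_div_cancel_left)
  qed
  finally have e: "(\<Sum>t\<in>T. real (card (shifted A S (g + t))) / real (card S)) = real (card (shifted A T g))" .
  define X where "X = (\<Sum>t\<in>T. (real (card (shifted A S (g + t))) / real (card S)) ^ 2)"
  define c where "c = real (card (shifted A T g))"
  have h: "c^2 \<le> X * real (card T)"
    using sum_squared_le_sum_of_squares[of "\<lambda>t. real (card (shifted A S (g + t))) / real (card S)" T] e
    unfolding X_def c_def by simp
  have "real (card T) * (c / real (card T)) ^ 2 = c^2 / real (card T)"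
    using pT by (simp add: power2_eq_square)
  also have "\<dots> \<le> X" using h pT by (simp add: pos_divide_le_eq)
  finally show ?thesis unfolding X_def c_def .
qed

lemma mono_sq:
  fixes S T H :: "(bit^'n::finite) set"
  assumes "is_subgroup S" "is_subgroup T" "is_subgroup H" "S \<subseteq> T" "T \<subseteq> H"
  shows "(\<Sum>h\<in>H. (real (card (shifted A S (g + h))) / real (card S)) ^ 2)
     \<ge> (\<Sum>h\<in>H. (real (card (shifted A T (g + h))) / real (card T)) ^ 2)"
proof -
  define f where "f y = (real (card (shifted A S y)) / real (card S)) ^ 2" for y
  have pT: "real (card T) > 0" using sg_card_pos assms by auto
  have j: "(\<Sum>t\<in>T. f (g + h + t)) \<ge> real (card T) * (real (card (shifted A T (g + h))) / real (card T)) ^ 2" for h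
    using jensen[OF assms(1,2,4), of A "g + h"] unfolding f_def by simp
  have "real (card T) * (\<Sum>h\<in>H. (real (card (shifted A T (g + h))) / real (card T)) ^ 2)
      \<le> (\<Sum>h\<in>H. \<Sum>t\<in>T. f (g + h + t))"
    unfolding sum_distrib_left by (rule sum_mono) (use j in auto)
  also have "\<dots> = (\<Sum>t\<in>T. \<Sum>h\<in>H. f (g + (h + t)))"
    by (subst sum.swap) (simp add: add.assoc)
  also have "\<dots> = (\<Sum>t\<in>T. \<Sum>h\<in>H. f (g + h))"
  proof (rule sum.cong[OF refl])
    fix t assume "t \<in> T"
    then have "t \<in> H" using assms by blast
    show "(\<Sum>h\<in>H. f (g + (h + t))) = (\<Sum>h\<in>H. f (g + h))"
      using sum_shift[OF assms(3) \<open>t \<in> H\<close>, of "\<lambda>h. f (g + h)"] by simp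
  qed
  also have "\<dots> = real (card T) * (\<Sum>h\<in>H. f (g + h))" by simp
  finally show ?thesis using pT unfolding f_def by simp
qed

lemma char_mult:
  assumes "is_character H chi" "x \<in> H" "y \<in> H"
  shows "chi (x + y) = chi x * chi y"
  using assms unfolding is_character_def by blast

lemma char_0:
  assumes "is_subgroup (H::(bit^'n::finite) set)" "is_character H chi"
  shows "chi 0 = 1"
proof -
  have h0: "0 \<in> H" using sg0[OF assms(1)] .
  have "chi (0 + 0) = chi 0 * chi 0" using char_mult[OF assms(2) h0 h0] .
  then have "chi 0 * 1 = chi 0 * chi 0" by simp
  moreover have "chi 0 \<noteq> 0" using assms(2) h0 unfolding is_character_def by blast
  ultimately show ?thesis by (metis mult_left_cancel)
qed

lemma char_pm:
  assumes "is_subgroup (H::(bit^'n::finite) set)" "is_character H chi" "x \<in> H"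
  shows "chi x = 1 \<or> chi x = -1"
proof -
  have "chi (x + x) = chi x * chi x" using char_mult[OF assms(2,3,3)] .
  then have "chi x * chi x = 1" using char_0[OF assms(1,2)] by simp
  then have "(chi x)^2 = 1" by (simp add: power2_eq_square)
  then show ?thesis using power2_eq_1_iff by blast
qed

lemma char_norm:
  assumes "is_subgroup (H::(bit^'n::finite) set)" "is_character H chi" "x \<in> H"
  shows "cmod (chi x) = 1"
  using char_pm[OF assms] by auto

lemma ker_sg:
  assumes H: "is_subgroup (H::(bit^'n::finite) set)" and ch: "is_character H chi"
  shows "is_subgroup {x \<in> H. chi x = 1}"
  unfolding is_subgroup_def
proof (intro conjI ballI)
  show "0 \<in> {x \<in> H. chi x = 1}" using sg0[OF H] char_0[OF H ch] by blast
next
  fix x y assume x: "x \<in> {x \<in> H. chi x = 1}" and y: "y \<in> {x \<in> H. chi x = 1}"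
  then have "x + y \<in> H" using sgadd[OF H] by blast
  moreover have "chi (x + y) = 1" using char_mult[OF ch] x y by simp
  ultimately show "x + y \<in> {x \<in> H. chi x = 1}" by blast
next
  fix x assume "x \<in> {x \<in> H. chi x = 1}"
  then show "- x \<in> {x \<in> H. chi x = 1}" by simp
qed

definition fourier :: "(bit^'n::finite) set \<Rightarrow> (bit^'n) set \<Rightarrow> bit^'n \<Rightarrow> (bit^'n \<Rightarrow> complex) \<Rightarrow> complex" where
  "fourier A H g chi = (\<Sum>x\<in>H. (if x \<in> shifted A H g then 1 else 0) * chi x)"

lemma regular_value_fourier:
  "regular_value \<epsilon> A H g \<longleftrightarrow>
     (\<forall>chi. nontrivial_character H chi \<longrightarrow> cmod (fourier A H g chi) \<le> \<epsilon> * real (card H))"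
  unfolding regular_value_def fourier_def by simp

lemma fourier_alt:
  "fourier A H g chi = (\<Sum>x\<in>H. (if x + g \<in> A then 1 else 0) * chi x)"
  unfolding fourier_def shifted_def by (rule sum.cong) auto

lemma fourier_shift:
  assumes "is_subgroup (H::(bit^'n::finite) set)" "is_character H chi" "h \<in> H"
  shows "cmod (fourier A H (g + h) chi) = cmod (fourier A H g chi)"
proof -
  have "fourier A H (g + h) chi = (\<Sum>x\<in>H. (if (x + h) + (g + h) \<in> A then 1 else 0) * chi (x + h))"
    unfolding fourier_alt using sum_shift[OF assms(1,3), of "\<lambda>x. (if x + (g + h) \<in> A then 1 else 0) * chi x"]
    by simp
  also have "\<dots> = (\<Sum>x\<in>H. chi h * ((if x + g \<in> A then 1 else 0) * chi x))"
  proof (rule sum.cong[OF refl])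
    fix x assume "x \<in> H"
    then have "chi (x + h) = chi x * chi h" using assms unfolding is_character_def by blast
    then show "(if (x + h) + (g + h) \<in> A then 1 else 0) * chi (x + h) = chi h * ((if x + g \<in> A then 1 else 0) * chi x)"
      by simp
  qed
  also have "\<dots> = chi h * fourier A H g chi" unfolding fourier_alt by (simp add: sum_distrib_left)
  finally show ?thesis using char_norm[OF assms] by (simp add: norm_mult)
qed

lemma split_sum:
  fixes H :: "(bit^'n::finite) set"
  assumes "is_subgroup H" "is_character H chi" "s \<in> H" "chi s = -1"
  shows "(\<Sum>h\<in>H. f h) = (\<Sum>h\<in>{x \<in> H. chi x = 1}. f h) + (\<Sum>h\<in>{x \<in> H. chi x = 1}. f (h + s))"
proof -
  define K where "K = {x \<in> H. chi x = 1}"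
  have mult: "chi (x + s) = - chi x" if "x \<in> H" for x
    using assms that unfolding is_character_def by simp
  have HU: "H = K \<union> (\<lambda>h. h + s) ` K"
  proof
    show "H \<subseteq> K \<union> (\<lambda>h. h + s) ` K"
    proof
      fix x assume x: "x \<in> H"
      show "x \<in> K \<union> (\<lambda>h. h + s) ` K"
      proof (cases "chi x = 1")
        case True then show ?thesis using x K_def by blast
      next
        case False
        then have "chi x = -1" using char_pm[OF assms(1,2) x] by blast
        then have "x + s \<in> K" using mult[OF x] x assms sgadd unfolding K_def by auto
        moreover have "x = (x + s) + s" by simp
        ultimately show ?thesis by blast
      qed
    qed
    show "K \<union> (\<lambda>h. h + s) ` K \<subseteq> H" using assms sgadd unfolding K_def by auto
  qed
  have disj: "K \<inter> (\<lambda>h. h + s) ` K = {}" using mult unfolding K_def by auto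
  have inj: "inj_on (\<lambda>h. h + s) K" by (auto simp: inj_on_def)
  have "(\<Sum>h\<in>H. f h) = (\<Sum>h\<in>K. f h) + (\<Sum>h\<in>(\<lambda>h. h + s) ` K. f h)"
    using HU disj by (simp add: sum.union_disjoint)
  also have "(\<Sum>h\<in>(\<lambda>h. h + s) ` K. f h) = (\<Sum>h\<in>K. f (h + s))"
    using sum.reindex[OF inj, of f] by (simp add: comp_def)
  finally show ?thesis unfolding K_def .
qed

lemma bonus:
  fixes H S :: "(bit^'n::finite) set"
  assumes H: "is_subgroup H" and chi: "nontrivial_character H chi"
    and S: "is_subgroup S" "S \<subseteq> {x \<in> H. chi x = 1}"
    and big: "cmod (fourier A H g chi) > \<epsilon> * real (card H)" and eps: "\<epsilon> > 0"
  shows "(\<Sum>h\<in>H. (real (card (shifted A S (g + h))) / real (card S)) ^ 2)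
     \<ge> real (card H) * ((real (card (shifted A H g)) / real (card H)) ^ 2 + \<epsilon> ^ 2)"
proof -
  define K where "K = {x \<in> H. chi x = 1}"
  have ch: "is_character H chi" using chi nontrivial_character_def by blast
  have Ksg: "is_subgroup K" using ker_sg[OF H ch] K_def by simp
  have KH: "K \<subseteq> H" using K_def by blast
  obtain s where s: "s \<in> H" "chi s \<noteq> 1" using chi nontrivial_character_def by blast
  then have s1: "chi s = -1" using char_pm[OF H ch] by blast
  have sp: "(\<Sum>h\<in>H. f h) = (\<Sum>h\<in>K. f h) + (\<Sum>h\<in>K. f (h + s))" for f :: "_ \<Rightarrow> 'b::comm_monoid_add"
    using split_sum[OF H ch s(1) s1] K_def by simp
  have m: "(\<Sum>h\<in>H. (real (card (shifted A S (g + h))) / real (card S)) ^ 2)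
     \<ge> (\<Sum>h\<in>H. (real (card (shifted A K (g + h))) / real (card K)) ^ 2)"
    using mono_sq[OF S(1) Ksg H _ KH] S(2) K_def by simp
  define k where "k = real (card K)"
  define a where "a = real (card (shifted A K g))"
  define b where "b = real (card (shifted A K (g + s)))"
  have kpos: "k > 0" using sg_card_pos[OF Ksg] k_def by simp
  have cH: "real (card H) = 2 * k"
    using sp[of "\<lambda>_. (1::nat)"] k_def by simp
  have e1: "(\<Sum>h\<in>H. (real (card (shifted A K (g + h))) / real (card K)) ^ 2) = k * (a/k)^2 + k * (b/k)^2"
  proof -
    have "(\<Sum>h\<in>K. (real (card (shifted A K (g + h))) / real (card K)) ^ 2) = k * (a/k)^2"
      using shift_inv[OF Ksg] unfolding a_def k_def by simp
    moreover have "(\<Sum>h\<in>K. (real (card (shifted A K (g + (h + s)))) / real (card K)) ^ 2) = k * (b/k)^2"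
    proof -
      have "card (shifted A K (g + (h + s))) = card (shifted A K (g + s))" if "h \<in> K" for h
        using shift_inv[OF Ksg that, of A "g + s"] by (simp add: add.commute add.left_commute)
      then show ?thesis unfolding b_def k_def by simp
    qed
    ultimately show ?thesis using sp[of "\<lambda>h. (real (card (shifted A K (g + h))) / real (card K)) ^ 2"] by simp
  qed
  have e2: "real (card (shifted A H g)) = a + b"
  proof -
    have "card (shifted A H g) = (\<Sum>x\<in>K. if x + g \<in> A then 1 else (0::nat)) + (\<Sum>x\<in>K. if x + s + g \<in> A then 1 else (0::nat))"
      unfolding card_shifted_sum by (rule sp)
    also have "\<dots> = card (shifted A K g) + card (shifted A K (g + s))"
      unfolding card_shifted_sum by (simp add: add.assoc add.commute[of s g])
    finally show ?thesis unfolding a_def b_def by simp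
  qed
  have e3: "fourier A H g chi = complex_of_real (a - b)"
  proof -
    have "fourier A H g chi = (\<Sum>x\<in>K. (if x + g \<in> A then 1 else 0) * chi x) + (\<Sum>x\<in>K. (if x + s + g \<in> A then 1 else 0) * chi (x + s))"
      unfolding fourier_alt by (rule sp)
    also have "(\<Sum>x\<in>K. (if x + g \<in> A then 1 else 0) * chi x) = (\<Sum>x\<in>K. of_nat (if x + g \<in> A then 1 else 0))"
      by (rule sum.cong) (auto simp: K_def)
    also have "(\<Sum>x\<in>K. (if x + s + g \<in> A then 1 else 0) * chi (x + s)) = - (\<Sum>x\<in>K. of_nat (if x + (g + s) \<in> A then 1 else 0))"
      unfolding sum_negf[symmetric]
    proof (rule sum.cong[OF refl])
      fix x assume "x \<in> K"
      then have "chi (x + s) = -1" using ch s s1 unfolding is_character_def K_def by auto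
      then show "(if x + s + g \<in> A then 1 else 0) * chi (x + s) = - of_nat (if x + (g + s) \<in> A then 1 else 0)"
        by (simp add: add.commute add.left_commute)
    qed
    finally have "fourier A H g chi = of_nat (card (shifted A K g)) - of_nat (card (shifted A K (g + s)))"
      unfolding card_shifted_sum of_nat_sum by simp
    then show ?thesis unfolding a_def b_def by simp
  qed
  define x where "x = a / k"
  define y where "y = b / k"
  have "cmod (fourier A H g chi) = \<bar>a - b\<bar>" unfolding e3 norm_of_real ..
  then have "\<epsilon> * (2 * k) < \<bar>a - b\<bar>" using big cH by simp
  moreover have "\<bar>a - b\<bar> = \<bar>x - y\<bar> * k" using kpos unfolding x_def y_def
    by (simp add: diff_divide_distrib[symmetric] abs_divide)
  ultimately have "(2 * \<epsilon>) * k < \<bar>x - y\<bar> * k" by simp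
  then have ab: "2 * \<epsilon> < \<bar>x - y\<bar>" using kpos mult_less_cancel_right_pos by blast
  have "\<bar>2 * \<epsilon>\<bar> \<le> \<bar>x - y\<bar>" using ab eps by simp
  then have ab2: "(2 * \<epsilon>)^2 \<le> (x - y)^2" using abs_le_square_iff by blast
  have id: "(x^2 + y^2)/2 - ((x + y)/2)^2 = (x - y)^2/4" by (simp add: power2_eq_square field_simps)
  have ineq: "((x + y)/2)^2 + \<epsilon>^2 \<le> (x^2 + y^2)/2"
  proof -
    have "(2 * \<epsilon>)^2 = 4 * \<epsilon>^2" by (simp add: power_mult_distrib)
    then show ?thesis using ab2 id by linarith
  qed
  have "real (card H) * ((real (card (shifted A H g)) / real (card H)) ^ 2 + \<epsilon> ^ 2)
      = 2 * k * (((x + y)/2)^2 + \<epsilon>^2)"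
  proof -
    have q: "real (card (shifted A H g)) / real (card H) = (x + y) / 2"
    proof -
      have "real (card (shifted A H g)) / real (card H) = (real (card (shifted A H g)) / k) / 2"
        using cH by simp
      also have "real (card (shifted A H g)) / k = x + y"
        using e2 unfolding x_def y_def by (simp add: add_divide_distrib)
      finally show ?thesis .
    qed
    show ?thesis unfolding q by (simp only: cH)
  qed
  also have "\<dots> \<le> 2 * k * ((x^2 + y^2)/2)" using ineq kpos by simp
  also have "\<dots> = k * x^2 + k * y^2" by (simp add: field_simps)
  finally have fin: "real (card H) * ((real (card (shifted A H g)) / real (card H)) ^ 2 + \<epsilon> ^ 2) \<le> k * x^2 + k * y^2" .
  show ?thesis using m e1 fin unfolding x_def y_def by simp
qed



lemma coset_char:
  assumes "is_subgroup (S::(bit^'n::finite) set)"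
  shows "(\<lambda>h. g + h) ` S = {x. x + g \<in> S}"
proof
  show "(\<lambda>h. g + h) ` S \<subseteq> {x. x + g \<in> S}" by (auto simp: vec_eq_iff algebra_simps)
  show "{x. x + g \<in> S} \<subseteq> (\<lambda>h. g + h) ` S"
  proof
    fix x assume "x \<in> {x. x + g \<in> S}"
    moreover have "x = g + (x + g)" by (simp add: vec_eq_iff algebra_simps)
    ultimately show "x \<in> (\<lambda>h. g + h) ` S" by blast
  qed
qed

lemma quotient_card:
  assumes S: "is_subgroup (S::(bit^'n::finite) set)"
  shows "card (quotient_set S) * card S = CARD(bit^'n)"
proof -
  have U: "\<Union>(quotient_set S) = UNIV"
  proof -
    have "g \<in> (\<lambda>h. g + h) ` S" for g using sg0[OF S] by force
    then show ?thesis unfolding quotient_set_def by blast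
  qed
  have c: "\<forall>c\<in>quotient_set S. card c = card S"
    unfolding quotient_set_def by (auto intro!: card_image simp: inj_on_def)
  have d: "\<forall>c1\<in>quotient_set S. \<forall>c2\<in>quotient_set S. c1 \<noteq> c2 \<longrightarrow> c1 \<inter> c2 = {}"
  proof (intro ballI impI)
    fix c1 c2 assume "c1 \<in> quotient_set S" "c2 \<in> quotient_set S" "c1 \<noteq> c2"
    then obtain g1 g2 where g: "c1 = {x. x + g1 \<in> S}" "c2 = {x. x + g2 \<in> S}"
      unfolding quotient_set_def using coset_char[OF S] by blast
    show "c1 \<inter> c2 = {}"
    proof (rule ccontr)
      assume "c1 \<inter> c2 \<noteq> {}"
      then obtain y where y: "y + g1 \<in> S" "y + g2 \<in> S" using g by blast
      have "x + g1 \<in> S \<longleftrightarrow> x + g2 \<in> S" for x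
      proof -
        have "x + g2 = (x + g1) + ((y + g1) + (y + g2))" "x + g1 = (x + g2) + ((y + g1) + (y + g2))"
          by (simp_all add: vec_eq_iff algebra_simps)
        moreover have "(y + g1) + (y + g2) \<in> S" using y sgadd[OF S] by blast
        ultimately show ?thesis using sgadd[OF S] by metis
      qed
      then have "c1 = c2" using g by blast
      then show False using \<open>c1 \<noteq> c2\<close> by blast
    qed
  qed
  have "card S * card (quotient_set S) = card (\<Union>(quotient_set S))"
    by (rule card_partition) (use c d in auto)
  then show ?thesis using U by (simp add: mult.commute)
qed

lemma half_card:
  fixes S H :: "(bit^'n::finite) set"
  assumes H: "is_subgroup H" and ch: "is_character H chi" and S: "is_subgroup S" "S \<subseteq> H"
  shows "card S \<le> 2 * card {x \<in> S. chi x = 1}"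
proof (cases "\<forall>x\<in>S. chi x = 1")
  case True
  then have "{x \<in> S. chi x = 1} = S" by blast
  then show ?thesis by simp
next
  case False
  then obtain s where s: "s \<in> S" "chi s \<noteq> 1" by blast
  then have s1: "chi s = -1" using char_pm[OF H ch] S by blast
  define S1 where "S1 = {x \<in> S. chi x = 1}"
  define S2 where "S2 = {x \<in> S. chi x \<noteq> 1}"
  have "card S = card S1 + card S2"
  proof -
    have "S = S1 \<union> S2" "S1 \<inter> S2 = {}" unfolding S1_def S2_def by auto
    then show ?thesis by (simp add: card_Un_disjoint)
  qed
  moreover have "card S2 \<le> card S1"
  proof (rule card_inj_on_le)
    show "inj_on (\<lambda>x. x + s) S2" by (auto simp: inj_on_def)
    show "(\<lambda>x. x + s) ` S2 \<subseteq> S1"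
    proof
      fix y assume "y \<in> (\<lambda>x. x + s) ` S2"
      then obtain x where x: "x \<in> S2" "y = x + s" by blast
      then have xS: "x \<in> S" "x \<in> H" using S S2_def by auto
      then have "chi x = -1" using x(1) char_pm[OF H ch] S2_def by auto
      moreover have "chi (x + s) = chi x * chi s" using ch xS s S unfolding is_character_def by blast
      ultimately have "chi y = 1" using s1 x by simp
      moreover have "y \<in> S" using x xS s sgadd[OF S(1)] by blast
      ultimately show "y \<in> S1" using S1_def by blast
    qed
  qed simp
  ultimately show ?thesis using S1_def by simp
qed

lemma ker_family_sg:
  fixes H :: "(bit^'n::finite) set"
  assumes H: "is_subgroup H" and ch: "\<forall>c\<in>D. is_character H (chi c)"
  shows "is_subgroup {x \<in> H. \<forall>c\<in>D. chi c x = 1}"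
  using H ch char_0[OF H] unfolding is_subgroup_def is_character_def by auto

lemma ker_family_card:
  fixes H :: "(bit^'n::finite) set"
  assumes H: "is_subgroup H" and ch: "\<forall>c\<in>D. is_character H (chi c)" and fin: "finite D"
  shows "card H \<le> 2 ^ card D * card {x \<in> H. \<forall>c\<in>D. chi c x = 1}"
  using fin ch
proof (induction D rule: finite_induct)
  case empty
  then show ?case by simp
next
  case (insert c D)
  define S where "S = {x \<in> H. \<forall>c\<in>D. chi c x = 1}"
  have S: "is_subgroup S" "S \<subseteq> H" using ker_family_sg[OF H] insert S_def by auto
  have "card H \<le> 2 ^ card D * card S" using insert S_def by simp
  also have "card S \<le> 2 * card {x \<in> S. chi c x = 1}"
    using half_card[OF H _ S] insert by simp
  also have "{x \<in> S. chi c x = 1} = {x \<in> H. \<forall>c\<in>insert c D. chi c x = 1}"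
    unfolding S_def by auto
  finally show ?case using insert by (simp add: mult.assoc)
qed

lemma sum_univ_avg:
  fixes H :: "(bit^'n::finite) set"
  assumes H: "is_subgroup H"
  shows "(\<Sum>g\<in>UNIV. f g) = (\<Sum>g\<in>UNIV. (\<Sum>h\<in>H. f (g + h)) / real (card H))"
proof -
  have U: "is_subgroup (UNIV :: (bit^'n) set)" by (simp add: is_subgroup_def)
  have "(\<Sum>g\<in>UNIV. \<Sum>h\<in>H. f (g + h)) = (\<Sum>h\<in>H. \<Sum>g\<in>UNIV. f (g + h))" by (rule sum.swap)
  also have "\<dots> = (\<Sum>h\<in>H. \<Sum>g\<in>UNIV. f g)"
  proof (rule sum.cong[OF refl])
    fix h show "(\<Sum>g\<in>UNIV. f (g + h)) = (\<Sum>g\<in>UNIV. f g)" using sum_shift[OF U, of h f] by simp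
  qed
  also have "\<dots> = real (card H) * (\<Sum>g\<in>UNIV. f g)" by simp
  finally have e: "(\<Sum>g\<in>UNIV. \<Sum>h\<in>H. f (g + h)) = real (card H) * (\<Sum>g\<in>UNIV. f g)" .
  have "(\<Sum>g\<in>UNIV. (\<Sum>h\<in>H. f (g + h)) / real (card H)) = (\<Sum>g\<in>UNIV. \<Sum>h\<in>H. f (g + h)) / real (card H)"
    by (simp add: sum_divide_distrib)
  also have "\<dots> = (\<Sum>g\<in>UNIV. f g)" unfolding e using sg_card_pos[OF H]
    by (metis less_irrefl nonzero_mult_div_cancel_left of_nat_0_less_iff)
  finally show ?thesis by simp
qed

lemma pow_aux0: "Suc m \<le> (2::nat) ^ m"
proof (induction m)
  case 0 then show ?case by simp
next
  case (Suc m)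
  have "(1::nat) \<le> 2 ^ m" by simp
  then show ?case using Suc by simp
qed

lemma quotient_elem_card:
  assumes S: "is_subgroup (S::(bit^'n::finite) set)" and c: "c \<in> quotient_set S"
  shows "card c = card S"
  using c unfolding quotient_set_def by (auto intro!: card_image simp: inj_on_def)

lemma quotient_disj:
  assumes S: "is_subgroup (S::(bit^'n::finite) set)"
    and c: "c1 \<in> quotient_set S" "c2 \<in> quotient_set S" "c1 \<noteq> c2"
  shows "c1 \<inter> c2 = {}"
proof -
  obtain g1 g2 where g: "c1 = {x. x + g1 \<in> S}" "c2 = {x. x + g2 \<in> S}"
    using c unfolding quotient_set_def using coset_char[OF S] by blast
  show "c1 \<inter> c2 = {}"
  proof (rule ccontr)
    assume "c1 \<inter> c2 \<noteq> {}"
    then obtain y where y: "y + g1 \<in> S" "y + g2 \<in> S" using g by blast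
    have "x + g1 \<in> S \<longleftrightarrow> x + g2 \<in> S" for x
    proof -
      have "x + g2 = (x + g1) + ((y + g1) + (y + g2))" "x + g1 = (x + g2) + ((y + g1) + (y + g2))"
        by (simp_all add: vec_eq_iff algebra_simps)
      moreover have "(y + g1) + (y + g2) \<in> S" using y sgadd[OF S] by blast
      ultimately show ?thesis using sgadd[OF S] by metis
    qed
    then have "c1 = c2" using g by blast
    then show False using c(3) by blast
  qed
qed

lemma quotient_union_card:
  assumes S: "is_subgroup (S::(bit^'n::finite) set)" and D: "D \<subseteq> quotient_set S"
  shows "card (\<Union>D) = card S * card D"
proof -
  have c1: "\<forall>c\<in>D. card c = card S" using D quotient_elem_card[OF S] by blast
  have c2: "\<forall>c1\<in>D. \<forall>c2\<in>D. c1 \<noteq> c2 \<longrightarrow> c1 \<inter> c2 = {}" using D quotient_disj[OF S] by blast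
  have "card S * card D = card (\<Union>D)"
    using card_partition[of D "card S"] c1 c2 by simp
  then show ?thesis by simp
qed

lemma coset_self:
  assumes S: "is_subgroup (S::(bit^'n::finite) set)"
  shows "g \<in> (\<lambda>h. g + h) ` S"
  using sg0[OF S] by force

lemma card_bit: "CARD(bit) = 2"
proof -
  have "(UNIV :: bit set) = {0, 1}" using bit_not_zero_iff by auto
  then show ?thesis by (metis card_2_iff zero_neq_one)
qed

lemma ceil_bound:
  fixes e :: real and m :: nat
  assumes "0 < e" "e < 1/2"
  shows "(2::nat) ^ m * 2 ^ nat \<lceil>e * 2 ^ m\<rceil> \<le> 2 ^ (2 ^ m)"
proof (cases "m = 0")
  case True
  have "\<lceil>e\<rceil> = 1" using assms by (simp add: ceiling_eq_iff)
  then show ?thesis using True by simp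
next
  case False
  define p where "p = (2::nat) ^ (m - 1)"
  have mS: "m = Suc (m - 1)" using False by simp
  have "(2::nat) ^ m = 2 ^ Suc (m - 1)" using mS by simp
  also have "\<dots> = 2 * p" unfolding p_def by (rule power_Suc)
  finally have m2: "(2::nat) ^ m = 2 * p" .
  have "(2::real) ^ m = 2 ^ Suc (m - 1)" using mS by simp
  also have "\<dots> = 2 * 2 ^ (m - 1)" by (rule power_Suc)
  finally have r2: "(2::real) ^ m = 2 * real p" unfolding p_def by simp
  have "e * 2 ^ m \<le> (1/2) * 2 ^ m"
    by (rule mult_right_mono) (use assms in simp_all)
  also have "\<dots> = real p" using r2 by simp
  finally have "e * 2 ^ m \<le> real p" .
  then have "\<lceil>e * 2 ^ m\<rceil> \<le> int p" by (simp add: ceiling_le_iff)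
  then have k: "nat \<lceil>e * 2 ^ m\<rceil> \<le> p" by (metis nat_le_iff)
  have mp: "m \<le> p" using pow_aux0[of "m - 1"] mS unfolding p_def by simp
  have "(2::nat) ^ m * 2 ^ nat \<lceil>e * 2 ^ m\<rceil> = 2 ^ (m + nat \<lceil>e * 2 ^ m\<rceil>)" by (simp add: power_add)
  also have "\<dots> \<le> 2 ^ (2 * p)"
  proof -
    have "m + nat \<lceil>e * 2 ^ m\<rceil> \<le> 2 * p" using k mp by linarith
    then show ?thesis by (rule power_increasing) simp
  qed
  finally show ?thesis using m2 by simp
qed

theorem lemma2p2:
  fixes A H :: "(bit ^ 'n::finite) set" and \<epsilon> :: real
  assumes "0 < \<epsilon>" and "\<epsilon> < 1/2"
    and "is_subgroup H"
    and "\<not> eps_regular \<epsilon> A H"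
  shows "\<exists>H'. is_subgroup H' \<and> H' \<subseteq> H
           \<and> card (quotient_set H') \<le> 2 ^ card (quotient_set H)
           \<and> ind A H' \<ge> ind A H + \<epsilon> ^ 3"
proof -
  note eps = assms(1,2)
  note H = assms(3)
  define N where "N = CARD(bit^'n)"
  define B where "B = {g. \<not> regular_value \<epsilon> A H g}"
  define Q where "Q = quotient_set H"
  define M where "M = card Q"
  have QH: "M * card H = N" using quotient_card[OF H] unfolding M_def Q_def N_def .
  have Hpos: "card H > 0" using sg_card_pos[OF H] .
  have Npos: "N > 0" unfolding N_def by simp
  have Binv: "g + h \<in> B" if "g \<in> B" "h \<in> H" for g h
  proof -
    have "\<exists>chi. nontrivial_character H chi \<and> cmod (fourier A H g chi) > \<epsilon> * real (card H)"
      using that(1) unfolding B_def regular_value_fourier by (auto simp: not_le)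
    then obtain chi where chi: "nontrivial_character H chi" "cmod (fourier A H g chi) > \<epsilon> * real (card H)"
      by blast
    have "is_character H chi" using chi(1) nontrivial_character_def by blast
    then have "cmod (fourier A H (g + h) chi) > \<epsilon> * real (card H)" using fourier_shift[OF H _ that(2)] chi(2) by simp
    then show ?thesis using chi(1) unfolding B_def regular_value_fourier by (auto simp: not_le)
  qed
  define NC where "NC = {c \<in> Q. c \<subseteq> B}"
  have BU: "B = \<Union>NC"
  proof
    show "B \<subseteq> \<Union>NC"
    proof
      fix g assume g: "g \<in> B"
      have "(\<lambda>h. g + h) ` H \<in> Q" unfolding Q_def quotient_set_def by blast
      moreover have "(\<lambda>h. g + h) ` H \<subseteq> B" using Binv g by blast
      ultimately have "(\<lambda>h. g + h) ` H \<in> NC" unfolding NC_def by blast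
      then show "g \<in> \<Union>NC" using coset_self[OF H] by blast
    qed
    show "\<Union>NC \<subseteq> B" unfolding NC_def by blast
  qed
  have cardB: "card B = card H * card NC"
    unfolding BU by (rule quotient_union_card[OF H]) (auto simp: NC_def Q_def)
  have "\<epsilon> * real N < real (card B)"
    using assms(4) unfolding eps_regular_def B_def N_def by simp
  then have "\<epsilon> * real M * real (card H) < real (card NC) * real (card H)"
    using cardB QH by (simp add: algebra_simps flip: of_nat_mult)
  then have eNC: "\<epsilon> * real M < real (card NC)" using Hpos by simp
  define k where "k = nat \<lceil>\<epsilon> * real M\<rceil>"
  have k_le: "k \<le> card NC"
  proof -
    have "\<epsilon> * real M \<le> real (card NC)" using eNC by linarith
    then have "\<lceil>\<epsilon> * real M\<rceil> \<le> int (card NC)" by (simp add: ceiling_le_iff)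
    then show ?thesis unfolding k_def by (metis nat_le_iff)
  qed
  have k_ge: "\<epsilon> * real M \<le> real k"
  proof -
    have "\<epsilon> * real M \<le> of_int \<lceil>\<epsilon> * real M\<rceil>" by (rule le_of_int_ceiling)
    moreover have "\<lceil>\<epsilon> * real M\<rceil> \<ge> 0"
    proof -
      have "0 \<le> \<epsilon> * real M" using eps by simp
      then show ?thesis by (metis ceiling_mono ceiling_zero)
    qed
    ultimately show ?thesis unfolding k_def by simp
  qed
  obtain C where C: "C \<subseteq> NC" "card C = k" using ex_card[OF k_le] by blast
  have CQ: "C \<subseteq> Q" using C NC_def by blast
  have "\<forall>c\<in>C. \<exists>chi. nontrivial_character H chi \<and> (\<forall>g\<in>c. \<epsilon> * real (card H) < cmod (fourier A H g chi))"
  proof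
    fix c assume c: "c \<in> C"
    then obtain r where r: "c = (\<lambda>h. r + h) ` H" using CQ unfolding Q_def quotient_set_def by blast
    have "r \<in> B" using c C r coset_self[OF H] unfolding NC_def by blast
    then have "\<exists>chi. nontrivial_character H chi \<and> cmod (fourier A H r chi) > \<epsilon> * real (card H)"
      unfolding B_def regular_value_fourier by (auto simp: not_le)
    then obtain chi where chi: "nontrivial_character H chi" "cmod (fourier A H r chi) > \<epsilon> * real (card H)"
      by blast
    have ch: "is_character H chi" using chi(1) nontrivial_character_def by blast
    have "\<forall>g\<in>c. \<epsilon> * real (card H) < cmod (fourier A H g chi)"
    proof
      fix g assume "g \<in> c"
      then obtain h where h: "h \<in> H" "g = r + h" using r by blast
      show "\<epsilon> * real (card H) < cmod (fourier A H g chi)"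
        using fourier_shift[OF H ch h(1), of A r] chi(2) h(2) by simp
    qed
    then show "\<exists>chi. nontrivial_character H chi \<and> (\<forall>g\<in>c. \<epsilon> * real (card H) < cmod (fourier A H g chi))"
      using chi(1) by blast
  qed
  then obtain chi where chi: "\<forall>c\<in>C. nontrivial_character H (chi c) \<and> (\<forall>g\<in>c. \<epsilon> * real (card H) < cmod (fourier A H g (chi c)))"
    by metis
  have chC: "\<forall>c\<in>C. is_character H (chi c)" using chi nontrivial_character_def by blast
  define H' where "H' = {x \<in> H. \<forall>c\<in>C. chi c x = 1}"
  have H'sg: "is_subgroup H'" unfolding H'_def by (rule ker_family_sg[OF H chC])
  have H'H: "H' \<subseteq> H" unfolding H'_def by blast
  have H'pos: "card H' > 0" using sg_card_pos[OF H'sg] .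
  have finC: "finite C" by simp
  have cardH: "card H \<le> 2 ^ k * card H'"
    using ker_family_card[OF H chC finC] C(2) unfolding H'_def by simp
  have Q'H': "card (quotient_set H') * card H' = N" using quotient_card[OF H'sg] unfolding N_def .
  have "card (quotient_set H') * card H' \<le> (M * 2 ^ k) * card H'"
    using Q'H' QH cardH by (metis mult.assoc mult_le_mono2)
  then have Q'le: "card (quotient_set H') \<le> M * 2 ^ k" using H'pos by simp
  obtain m where m: "M = 2 ^ m"
  proof -
    have "N = 2 ^ CARD('n)" unfolding N_def using card_bit by (simp add: CARD_vec)
    then have "M dvd 2 ^ CARD('n)" using QH by (metis dvd_triv_left)
    then show ?thesis using that divides_primepow_nat[of 2 M "CARD('n)"] by auto
  qed
  have "M * 2 ^ k \<le> 2 ^ M"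
    using ceil_bound[OF eps, of m] unfolding k_def m by simp
  then have card_ok: "card (quotient_set H') \<le> 2 ^ card (quotient_set H)"
    using Q'le unfolding M_def Q_def by linarith
  define U where "U = \<Union>C"
  define dH where "dH g = real (card (shifted A H g)) / real (card H)" for g
  define dH' where "dH' g = real (card (shifted A H' g)) / real (card H')" for g
  have per: "(\<Sum>h\<in>H. (dH' (g + h)) ^ 2) \<ge> real (card H) * ((dH g) ^ 2 + (if g \<in> U then \<epsilon> ^ 2 else 0))" for g
  proof (cases "g \<in> U")
    case True
    then obtain c where c: "c \<in> C" "g \<in> c" unfolding U_def by blast
    have "H' \<subseteq> {x \<in> H. chi c x = 1}" unfolding H'_def using c by blast
    then show ?thesis using bonus[OF H _ H'sg _ _ eps(1), of "chi c" A g] chi c True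
      unfolding dH_def dH'_def by simp
  next
    case False
    then show ?thesis using jensen[OF H'sg H H'H, of A g] unfolding dH_def dH'_def by simp
  qed
  have cardU: "real (card U) \<ge> \<epsilon> * real N"
  proof -
    have "card U = card H * k" unfolding U_def using quotient_union_card[OF H] CQ C(2) Q_def by simp
    then have "real (card U) = real (card H) * real k" by simp
    have eN: "real N = real (card H) * real M" using QH by (metis of_nat_mult mult.commute)
    have "\<epsilon> * real N = real (card H) * (\<epsilon> * real M)" using eN by simp
    also have "\<dots> \<le> real (card H) * real k" using k_ge by (simp add: mult_left_mono)
    finally show ?thesis using \<open>real (card U) = real (card H) * real k\<close> by simp
  qed
  have "(\<Sum>g\<in>UNIV. (dH' g) ^ 2) = (\<Sum>g\<in>UNIV. (\<Sum>h\<in>H. (dH' (g + h)) ^ 2) / real (card H))"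
    by (rule sum_univ_avg[OF H])
  also have "\<dots> \<ge> (\<Sum>g\<in>UNIV. (dH g) ^ 2 + (if g \<in> U then \<epsilon> ^ 2 else 0))"
  proof (rule sum_mono)
    fix g
    show "(dH g) ^ 2 + (if g \<in> U then \<epsilon> ^ 2 else 0) \<le> (\<Sum>h\<in>H. (dH' (g + h)) ^ 2) / real (card H)"
      using per[of g] Hpos by (simp add: pos_le_divide_eq mult.commute)
  qed
  finally have "(\<Sum>g\<in>UNIV. (dH' g) ^ 2) \<ge> (\<Sum>g\<in>UNIV. (dH g) ^ 2) + \<epsilon> ^ 2 * real (card U)"
    by (simp add: sum.distrib sum.If_cases mult.commute)
  moreover have "\<epsilon> ^ 2 * real (card U) \<ge> \<epsilon> ^ 3 * real N"
    using cardU eps by (simp add: power3_eq_cube power2_eq_square mult.assoc mult_left_mono)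
  ultimately have tot: "(\<Sum>g\<in>UNIV. (dH' g) ^ 2) \<ge> (\<Sum>g\<in>UNIV. (dH g) ^ 2) + \<epsilon> ^ 3 * real N" by linarith
  have indH: "ind A H = (\<Sum>g\<in>UNIV. (dH g) ^ 2) / real N" unfolding ind_def dH_def N_def by simp
  have indH': "ind A H' = (\<Sum>g\<in>UNIV. (dH' g) ^ 2) / real N" unfolding ind_def dH'_def N_def by simp
  have "ind A H + \<epsilon> ^ 3 = ((\<Sum>g\<in>UNIV. (dH g) ^ 2) + \<epsilon> ^ 3 * real N) / real N"
    unfolding indH using Npos by (simp add: add_divide_distrib)
  also have "\<dots> \<le> ind A H'" unfolding indH' using tot Npos by (simp add: divide_right_mono)
  finally have "ind A H' \<ge> ind A H + \<epsilon> ^ 3" .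
  then show ?thesis using H'sg H'H card_ok by blast
qed

end
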